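(* Let $C>0$ and let $\varphi_{0,i}(u,v,z)=r^{p_i}z^{q_i}$, $i=1,2$, where $r=\sqrt{u^2+v^2}$. Then for all $r_*>0$ sufficiently large, on $\mathcal{R}_0=\{(u,v,z): r\ge r_*,\ Cu\ge|v|,\ 0<z\le1\}$ one has $\mathcal{L}\varphi_{0,i}(u,v,z)\le-\gamma p_ir^{p_i}z^{q_i}-\frac{\beta_i}{2\sqrt{1+C^2}}r^{p_i+1}z^{q_i-2/3}$, $i=1,2$, and for all $(u,v,1)\in\mathcal{R}_0$, $\mathcal{Q}(\varphi_{0,1}+\varphi_{0,2})(u,v,1)\le-\left(\tfrac{q_2}{2}-\tfrac{p_2}{6}\right)r^{p_2}.$
   Context: Fix $\gamma>0$, $h\in(0,1)$, $\kappa_1,\kappa_2>0$ and $\alpha_h=\frac13+\frac23h$. Constants $p_i,q_i,\alpha_i,\beta_i$ ($i=1,2$) satisfy $p_1>0$, $p_2>0$, $q_1=0$, $q_2>0$, $0<\alpha_hp_i-(1-h)q_i=\beta_i<\alpha_i<1$, $q_2>\frac13p_2+\frac12\alpha_2$, $p_2>p_1$, $p_2+\frac32\alpha_2>p_1+\frac32\alpha_1$. On $\mathbb{R}\times\mathbb{R}\times(0,1]$ define the differential operators $\mathcal{L}=-\gamma u\partial_u-\gamma v\partial_v-\frac{\alpha_hu^2-v^2}{z^{2/3}}\partial_u-(\alpha_h+1)\frac{uv}{z^{2/3}}\partial_v+(1-h)uz^{1/3}\partial_z+\frac{\kappa_1}{z^{2/3}}\partial_u^2+\frac{\kappa_2}{z^{2/3}}\partial_v^2$,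 $\mathcal{Q}=\frac{u}{3z}\partial_u+\frac{v}{3z}\partial_v-\partial_z$ (these are the interior generator and boundary operator of the reflected system after the change of variables $u=xz^{-1/3}$, $v=yz^{-1/3}$). *)

theory Defs
  imports "HOL-Analysis.Analysis"
begin

definition pd_u :: "(real \<Rightarrow> real \<Rightarrow> real \<Rightarrow> real) \<Rightarrow> real \<Rightarrow> real \<Rightarrow> real \<Rightarrow> real" where
  "pd_u f u v z = deriv (\<lambda>s. f s v z) u"

definition pd_v :: "(real \<Rightarrow> real \<Rightarrow> real \<Rightarrow> real) \<Rightarrow> real \<Rightarrow> real \<Rightarrow> real \<Rightarrow> real" where
  "pd_v f u v z = deriv (\<lambda>s. f u s z) v"

definition pd_z :: "(real \<Rightarrow> real \<Rightarrow> real \<Rightarrow> real) \<Rightarrow> real \<Rightarrow> real \<Rightarrow> real \<Rightarrow> real" where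
  "pd_z f u v z = deriv (\<lambda>s. f u v s) z"

definition pd_uu :: "(real \<Rightarrow> real \<Rightarrow> real \<Rightarrow> real) \<Rightarrow> real \<Rightarrow> real \<Rightarrow> real \<Rightarrow> real" where
  "pd_uu f u v z = deriv (\<lambda>s. deriv (\<lambda>t. f t v z) s) u"

definition pd_vv :: "(real \<Rightarrow> real \<Rightarrow> real \<Rightarrow> real) \<Rightarrow> real \<Rightarrow> real \<Rightarrow> real \<Rightarrow> real" where
  "pd_vv f u v z = deriv (\<lambda>s. deriv (\<lambda>t. f u t z) s) v"

definition alpha_h :: "real \<Rightarrow> real" where
  "alpha_h h = 1/3 + 2/3 * h"

definition opL :: "real \<Rightarrow> real \<Rightarrow> real \<Rightarrow> real \<Rightarrow> (real \<Rightarrow> real \<Rightarrow> real \<Rightarrow> real)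
    \<Rightarrow> real \<Rightarrow> real \<Rightarrow> real \<Rightarrow> real" where
  "opL \<gamma> h \<kappa>1 \<kappa>2 f u v z =
     - \<gamma> * u * pd_u f u v z - \<gamma> * v * pd_v f u v z
     - (alpha_h h * u^2 - v^2) / z powr (2/3) * pd_u f u v z
     - (alpha_h h + 1) * u * v / z powr (2/3) * pd_v f u v z
     + (1 - h) * u * z powr (1/3) * pd_z f u v z
     + \<kappa>1 / z powr (2/3) * pd_uu f u v z
     + \<kappa>2 / z powr (2/3) * pd_vv f u v z"

definition opQ :: "(real \<Rightarrow> real \<Rightarrow> real \<Rightarrow> real) \<Rightarrow> real \<Rightarrow> real \<Rightarrow> real \<Rightarrow> real" where
  "opQ f u v z = u / (3*z) * pd_u f u v z + v / (3*z) * pd_v f u v z - pd_z f u v z"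

definition phi0 :: "real \<Rightarrow> real \<Rightarrow> real \<Rightarrow> real \<Rightarrow> real \<Rightarrow> real" where
  "phi0 p q u v z = sqrt (u^2 + v^2) powr p * z powr q"

end

theory Submission imports Defs begin

lemma phi0_du:
  assumes "a^2+b^2 > 0"
  shows "((\<lambda>s. phi0 p q s b z) has_real_derivative
           (p * sqrt(a^2+b^2) powr (p-2) * a * z powr q)) (at a)"
proof -
  have r: "sqrt(a^2+b^2) > 0" using assms by simp
  have D: "((\<lambda>s. sqrt(s^2+b^2) powr p * z powr q) has_real_derivative
     (p * sqrt(a^2+b^2) powr (p-1) * (inverse (sqrt (a^2+b^2)) / 2 * (2*a)) * z powr q)) (at a)"
    apply (rule DERIV_cmult_right)
    apply (rule DERIV_fun_powr[where g="\<lambda>s. sqrt(s^2+b^2)", simplified])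
    apply (rule DERIV_chain2[OF DERIV_real_sqrt])
    using assms apply simp
    apply (auto intro!: derivative_eq_intros)
    using r by simp
  have E: "p * sqrt(a^2+b^2) powr (p-1) * (inverse (sqrt (a^2+b^2)) / 2 * (2*a)) * z powr q
     = p * sqrt(a^2+b^2) powr (p-2) * a * z powr q"
    using r by (simp add: powr_diff field_simps)
  show ?thesis unfolding phi0_def using D[unfolded E] .
qed

lemma pd_u_phi0: "a^2+b^2 > 0 \<Longrightarrow> pd_u (phi0 p q) a b z = p * sqrt(a^2+b^2) powr (p-2) * a * z powr q"
  unfolding pd_u_def by (rule DERIV_imp_deriv[OF phi0_du])

lemma phi0_sym: "phi0 p q u v z = phi0 p q v u z"
  by (simp add: phi0_def add.commute)

lemma pd_v_phi0: "a^2+b^2 > 0 \<Longrightarrow> pd_v (phi0 p q) a b z = p * sqrt(a^2+b^2) powr (p-2) * b * z powr q"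
  unfolding pd_v_def using pd_u_phi0[of b a p q z] by (simp add: pd_u_def phi0_sym add.commute)

lemma pd_z_phi0: "z > 0 \<Longrightarrow> pd_z (phi0 p q) a b z = sqrt(a^2+b^2) powr p * (q * z powr (q - 1))"
  unfolding pd_z_def phi0_def
  by (rule DERIV_imp_deriv, rule DERIV_cmult, rule has_real_derivative_powr)

lemma phi0_duu:
  assumes "a^2+b^2 > 0"
  shows "pd_uu (phi0 p q) a b z = p * z powr q * (sqrt(a^2+b^2) powr (p-2) + (p-2) * a^2* sqrt(a^2+b^2) powr (p-4))"
proof -
  have op: "open {s::real. 0 < s^2+b^2}" by (intro open_Collect_less continuous_intros)
  have ev: "eventually (\<lambda>s. deriv (\<lambda>t. phi0 p q t b z) s = p * sqrt(s^2+b^2) powr (p-2) * s * z powr q) (nhds a)"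
    unfolding eventually_nhds using op assms
    by (intro exI[of _ "{s::real. 0 < s^2+b^2}"]) (auto intro: DERIV_imp_deriv phi0_du)
  have r: "sqrt(a^2+b^2) > 0" using assms by simp
  have e: "sqrt(a^2+b^2) powr (p-4) = sqrt(a^2+b^2) powr (p-3) * inverse (sqrt(a^2+b^2))"
    using powr_diff[of "sqrt(a^2+b^2)" "p-3" 1] r by (simp add: divide_inverse)
  have D: "((\<lambda>s. p * sqrt(s^2+b^2) powr (p-2) * s * z powr q) has_real_derivative
      p * z powr q * (sqrt(a^2+b^2) powr (p-2) + (p-2) * a^2* sqrt(a^2+b^2) powr (p-4))) (at a)"
    using assms r
    apply (auto intro!: derivative_eq_intros)
    using e by (simp add: algebra_simps divide_inverse power2_eq_square)
  show ?thesis unfolding pd_uu_def using deriv_cong_ev[OF ev refl] DERIV_imp_deriv[OF D] by simp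
qed

lemma pd_vv_phi0:
  assumes "a^2+b^2 > 0"
  shows "pd_vv (phi0 p q) a b z = p * z powr q * (sqrt(a^2+b^2) powr (p-2) + (p-2) * b^2 * sqrt(a^2+b^2) powr (p-4))"
proof -
  have "pd_vv (phi0 p q) a b z = pd_uu (phi0 p q) b a z"
    unfolding pd_vv_def pd_uu_def by (simp add: phi0_sym)
  also have "... = p * z powr q * (sqrt(b^2+a^2) powr (p-2) + (p-2) * b^2 * sqrt(b^2+a^2) powr (p-4))"
    using assms by (intro phi0_duu) (simp add: add.commute)
  finally show ?thesis by (simp add: add.commute)
qed

lemma L_bound:
  fixes \<gamma> h \<kappa>1 \<kappa>2 C P Q \<beta> u v z :: real
  assumes "\<gamma> > 0" "\<kappa>1 > 0" "\<kappa>2 > 0" "P > 0" "\<beta> > 0"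
    and \<beta>: "\<beta> = alpha_h h * P - (1 - h) * Q"
    and "u > 0" "\<bar>v\<bar> \<le> C * u" "0 < z" "C > 0"
    and r1: "1 \<le> sqrt (u^2+v^2)"
    and rM: "2 * sqrt (1 + C^2) * (\<kappa>1 + \<kappa>2) * P * (1 + \<bar>P - 2\<bar>) / \<beta> \<le> sqrt (u^2+v^2)"
  shows "opL \<gamma> h \<kappa>1 \<kappa>2 (phi0 P Q) u v z
             \<le> - \<gamma> * P * sqrt (u^2 + v^2) powr P * z powr Q
               - \<beta> / (2 * sqrt (1 + C^2)) * sqrt (u^2 + v^2) powr (P + 1)
                   * z powr (Q - 2/3)"
proof -
  define r where "r = sqrt (u^2+v^2)"
  define s where "s = sqrt (1 + C^2)"
  define A where "A = r powr P"
  define zq where "zq = z powr Q"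
  define w where "w = z powr (2/3)"
  have pos: "u^2+v^2 > 0" using \<open>u > 0\<close> by (simp add: add_pos_nonneg)
  have rpos: "r > 0" using pos r_def by simp
  have r2: "r^2 = u^2+v^2" using pos r_def by simp
  have spos: "s > 0" using s_def by (simp add: add_pos_nonneg)
  have Apos: "A > 0" and zqpos: "zq > 0" and wpos: "w > 0"
    using rpos \<open>0 < z\<close> by (auto simp: A_def zq_def w_def)
  have e1: "r powr (P-2) = A / r^2" using rpos by (simp add: A_def powr_diff)
  have e2: "r powr (P-4) = A / r^4" using rpos by (simp add: A_def powr_diff)
  have e3: "r powr (P+1) = A * r" using rpos by (simp add: A_def powr_add)
  have e4: "z powr (Q-1) = zq / z" using \<open>0 < z\<close> by (simp add: zq_def powr_diff)
  have e5: "z powr (Q-2/3) = zq / w" using \<open>0 < z\<close> by (simp add: zq_def w_def powr_diff)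
  have e6: "z powr (1/3) = z / w" using \<open>0 < z\<close> powr_add[of z "1/3" "2/3"] by (simp add: w_def field_simps)
  define K where "K = P * (\<kappa>1 * (1/r^2 + (P-2) * u^2/r^4) + \<kappa>2 * (1/r^2 + (P-2) * v^2/r^4))"
  have pu: "pd_u (phi0 P Q) u v z = P * (A/r^2) * u * zq"
    using pd_u_phi0[OF pos] by (simp add: r_def[symmetric] e1 zq_def)
  have pv: "pd_v (phi0 P Q) u v z = P * (A/r^2) * v * zq"
    using pd_v_phi0[OF pos] by (simp add: r_def[symmetric] e1 zq_def)
  have pz: "pd_z (phi0 P Q) u v z = A * (Q * (zq / z))"
    using pd_z_phi0[OF \<open>0<z\<close>] by (simp add: r_def[symmetric] A_def e4)
  have puu: "pd_uu (phi0 P Q) u v z = P * zq * (A/r^2 + (P-2) * u^2 * (A/r^4))"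
    using phi0_duu[OF pos] by (simp add: r_def[symmetric] e1 e2 zq_def)
  have pvv: "pd_vv (phi0 P Q) u v z = P * zq * (A/r^2 + (P-2) * v^2 * (A/r^4))"
    using pd_vv_phi0[OF pos] by (simp add: r_def[symmetric] e1 e2 zq_def)
  have T1: "- \<gamma> * u * (P * (A/r^2) * u * zq) - \<gamma> * v * (P * (A/r^2) * v * zq) = - \<gamma> * P * A * zq"
  proof -
    have "- \<gamma> * u * (P * (A/r^2) * u * zq) - \<gamma> * v * (P * (A/r^2) * v * zq)
       = - \<gamma> * P * A * zq * ((u^2+v^2)/r^2)" using rpos by (simp add: field_simps power2_eq_square)
    also have "... = - \<gamma> * P * A * zq" using rpos by (simp add: r2[symmetric])
    finally show ?thesis .
  qed
  have T2: "- (alpha_h h * u^2 - v^2) / w * (P * (A/r^2) * u * zq)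
     - (alpha_h h + 1) * u * v / w * (P * (A/r^2) * v * zq) = - alpha_h h * P * u * A * zq / w"
  proof -
    have "- (alpha_h h * u^2 - v^2) / w * (P * (A/r^2) * u * zq)
     - (alpha_h h + 1) * u * v / w * (P * (A/r^2) * v * zq)
       = - alpha_h h * P * u * A * zq / w * ((u^2+v^2)/r^2)" using wpos rpos by (simp add: field_simps power2_eq_square)
    also have "... = - alpha_h h * P * u * A * zq / w" using rpos by (simp add: r2[symmetric])
    finally show ?thesis .
  qed
  define K where "K = P * (\<kappa>1 * (1/r^2 + (P-2) * u^2/r^4) + \<kappa>2 * (1/r^2 + (P-2) * v^2/r^4))"
  have T4: "\<kappa>1 / w * (P * zq * (A/r^2 + (P-2) * u^2 * (A/r^4))) + \<kappa>2 / w * (P * zq * (A/r^2 + (P-2) * v^2 * (A/r^4)))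
     = A * zq / w * K" unfolding K_def using wpos rpos by (simp add: field_simps)
  have T3: "(1 - h) * u * (z / w) * (A * (Q * (zq / z))) = (1-h) * Q * u * A * zq / w"
    using wpos \<open>0<z\<close> by (simp add: field_simps)
  have eq: "opL \<gamma> h \<kappa>1 \<kappa>2 (phi0 P Q) u v z = - \<gamma> * P * A * zq + (A * zq / w) * (- \<beta> * u + K)"
  proof -
    have "opL \<gamma> h \<kappa>1 \<kappa>2 (phi0 P Q) u v z =
      (- \<gamma> * u * (P * (A/r^2) * u * zq) - \<gamma> * v * (P * (A/r^2) * v * zq))
      + (- (alpha_h h * u^2 - v^2) / w * (P * (A/r^2) * u * zq)
     - (alpha_h h + 1) * u * v / w * (P * (A/r^2) * v * zq))
      + (1 - h) * u * (z / w) * (A * (Q * (zq / z)))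
      + (\<kappa>1 / w * (P * zq * (A/r^2 + (P-2) * u^2 * (A/r^4))) + \<kappa>2 / w * (P * zq * (A/r^2 + (P-2) * v^2 * (A/r^4))))"
      unfolding opL_def pu pv pz puu pvv e6 w_def[symmetric] by simp (simp add: algebra_simps minus_divide_left)
    also have "... = - \<gamma> * P * A * zq + (A * zq / w) * (- \<beta> * u + K)"
      unfolding T1 T2 T3 T4 \<beta> using wpos by (simp add: field_simps)
    finally show ?thesis .
  qed
  have v2: "v^2 \<le> C^2 * u^2"
  proof -
    have "\<bar>v\<bar>^2 \<le> (C*u)^2" using assms(8) by (intro power_mono) auto
    thus ?thesis by (simp add: power_mult_distrib)
  qed
  have rsu: "r \<le> s * u"
  proof -
    have "r = sqrt (u^2+v^2)" by (simp add: r_def)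
    also have "... \<le> sqrt ((1+C^2) * u^2)" using v2 by (intro real_sqrt_le_mono) (simp add: algebra_simps)
    also have "... = s * u" using \<open>u>0\<close> by (simp add: s_def real_sqrt_mult)
    finally show ?thesis .
  qed
  define X where "X = P * (\<kappa>1 + \<kappa>2) * (1 + \<bar>P - 2\<bar>)"
  have u2: "u^2 \<le> r^2" and vv2: "v^2 \<le> r^2" using r2 by auto
  have b1: "(P-2) * u^2 / r^4 \<le> \<bar>P-2\<bar> / r^2"
  proof -
    have "(P-2) * u^2 \<le> \<bar>P-2\<bar> * r^2" using u2
      by (meson abs_ge_self mult_mono abs_ge_zero zero_le_power2 order_trans)
    hence "(P-2) * u^2 / r^4 \<le> \<bar>P-2\<bar> * r^2 / r^4" using rpos by (intro divide_right_mono) auto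
    also have "... = \<bar>P-2\<bar> / r^2" using rpos by (simp add: field_simps power_def)
    finally show ?thesis .
  qed
  have b2: "(P-2) * v^2 / r^4 \<le> \<bar>P-2\<bar> / r^2"
  proof -
    have "(P-2) * v^2 \<le> \<bar>P-2\<bar> * r^2" using vv2
      by (meson abs_ge_self mult_mono abs_ge_zero zero_le_power2 order_trans)
    hence "(P-2) * v^2 / r^4 \<le> \<bar>P-2\<bar> * r^2 / r^4" using rpos by (intro divide_right_mono) auto
    also have "... = \<bar>P-2\<bar> / r^2" using rpos by (simp add: field_simps power_def)
    finally show ?thesis .
  qed
  have KX: "K \<le> X / r^2"
  proof -
    have "\<kappa>1 * (1/r^2 + (P-2) * u^2/r^4) \<le> \<kappa>1 * ((1 + \<bar>P-2\<bar>)/r^2)"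
      using b1 assms(2) by (intro mult_left_mono) (auto simp: add_divide_distrib)
    moreover have "\<kappa>2 * (1/r^2 + (P-2) * v^2/r^4) \<le> \<kappa>2 * ((1 + \<bar>P-2\<bar>)/r^2)"
      using b2 assms(3) by (intro mult_left_mono) (auto simp: add_divide_distrib)
    ultimately have "K \<le> P * (\<kappa>1 * ((1 + \<bar>P-2\<bar>)/r^2) + \<kappa>2 * ((1 + \<bar>P-2\<bar>)/r^2))"
      unfolding K_def using assms(4) by (intro mult_left_mono) auto
    also have "... = X / r^2" unfolding X_def by (simp add: algebra_simps add_divide_distrib)
    finally show ?thesis .
  qed
  have X0: "X \<ge> 0" unfolding X_def using assms(2-4) by simp
  have Xr: "X / r^2 \<le> X"
  proof -
    have "1 \<le> r^2" using r1 r_def by simp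
    thus ?thesis using X0 by (simp add: divide_le_eq mult_le_cancel_left1 mult_left_le)
  qed
  have XM: "X \<le> \<beta> * r / (2 * s)"
    using rM assms(5) spos unfolding r_def[symmetric] s_def[symmetric] X_def
    by (simp add: field_simps)
  have ub: "- \<beta> * u \<le> - \<beta> * r / s"
    using rsu spos assms(5) by (simp add: field_simps)
  have key: "- \<beta> * u + K \<le> - \<beta> * r / (2 * s)"
    using KX Xr XM ub by (simp add: field_simps)
  have fac: "A * zq / w > 0" using Apos zqpos wpos by simp
  have "opL \<gamma> h \<kappa>1 \<kappa>2 (phi0 P Q) u v z \<le> - \<gamma> * P * A * zq + (A * zq / w) * (- \<beta> * r / (2 * s))"
    unfolding eq using mult_left_mono[OF key less_imp_le[OF fac]] by simp
  also have "... = - \<gamma> * P * sqrt (u^2 + v^2) powr P * z powr Q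
               - \<beta> / (2 * sqrt (1 + C^2)) * sqrt (u^2 + v^2) powr (P + 1)
                   * z powr (Q - 2/3)"
    unfolding r_def[symmetric] s_def[symmetric] e3 e5 A_def[symmetric] zq_def[symmetric]
    by (simp add: field_simps)
  finally show ?thesis .
qed

lemma Q_bound:
  fixes p1 p2 q2 u v :: real
  assumes pos: "u^2+v^2 > 0" and "p1 > 0" and "p2 > p1" and c: "q2/2 - p2/6 > 0"
    and T: "sqrt (u^2+v^2) powr (p2 - p1) \<ge> p1 / (3 * (q2/2 - p2/6))"
  shows "opQ (\<lambda>a b c. phi0 p1 0 a b c + phi0 p2 q2 a b c) u v 1
          \<le> - (q2 / 2 - p2 / 6) * sqrt (u^2 + v^2) powr p2"
proof -
  define r where "r = sqrt (u^2+v^2)"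
  have rpos: "r > 0" using pos r_def by simp
  have r2: "r^2 = u^2+v^2" using pos r_def by simp
  have du: "pd_u (\<lambda>a b c. phi0 p1 0 a b c + phi0 p2 q2 a b c) u v 1
     = p1 * r powr (p1-2) * u + p2 * r powr (p2-2) * u"
  proof -
    have "pd_u (\<lambda>a b c. phi0 p1 0 a b c + phi0 p2 q2 a b c) u v 1
     = p1 * sqrt(u^2+v^2) powr (p1-2) * u * 1 powr 0 + p2 * sqrt(u^2+v^2) powr (p2-2) * u * 1 powr q2"
      unfolding pd_u_def
      by (rule DERIV_imp_deriv, rule DERIV_add[OF phi0_du[OF pos] phi0_du[OF pos]])
    thus ?thesis by (simp add: r_def)
  qed
  have dv: "pd_v (\<lambda>a b c. phi0 p1 0 a b c + phi0 p2 q2 a b c) u v 1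
     = p1 * r powr (p1-2) * v + p2 * r powr (p2-2) * v"
  proof -
    have pos': "v^2+u^2 > 0" using pos by (simp add: add.commute)
    have "pd_v (\<lambda>a b c. phi0 p1 0 a b c + phi0 p2 q2 a b c) u v 1
       = deriv (\<lambda>s. phi0 p1 0 s u 1 + phi0 p2 q2 s u 1) v"
      unfolding pd_v_def by (simp add: phi0_sym[of _ _ u])
    also have "... = p1 * sqrt(v^2+u^2) powr (p1-2) * v * 1 powr 0 + p2 * sqrt(v^2+u^2) powr (p2-2) * v * 1 powr q2"
      by (rule DERIV_imp_deriv, rule DERIV_add[OF phi0_du[OF pos'] phi0_du[OF pos']])
    finally show ?thesis by (simp add: r_def add.commute)
  qed
  have dz: "pd_z (\<lambda>a b c. phi0 p1 0 a b c + phi0 p2 q2 a b c) u v 1 = q2 * r powr p2"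
  proof -
    have "pd_z (\<lambda>a b c. phi0 p1 0 a b c + phi0 p2 q2 a b c) u v 1
       = r powr p1 * (0 * 1 powr (0 - 1)) + r powr p2 * (q2 * 1 powr (q2 - 1))"
      unfolding pd_z_def phi0_def r_def
      by (rule DERIV_imp_deriv, rule DERIV_add, (rule DERIV_cmult, rule has_real_derivative_powr, simp)+)
    thus ?thesis by simp
  qed
  have e1: "r powr (p1-2) = r powr p1 / r^2" using rpos by (simp add: powr_diff)
  have e2: "r powr (p2-2) = r powr p2 / r^2" using rpos by (simp add: powr_diff)
  have "opQ (\<lambda>a b c. phi0 p1 0 a b c + phi0 p2 q2 a b c) u v 1
     = p1/3 * r powr p1 * ((u^2+v^2)/r^2) + p2/3 * r powr p2 * ((u^2+v^2)/r^2) - q2 * r powr p2"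
    unfolding opQ_def du dv dz e1 e2 using rpos by (simp add: field_simps power2_eq_square)
  also have "... = p1/3 * r powr p1 + p2/3 * r powr p2 - q2 * r powr p2"
    using rpos by (simp add: r2[symmetric])
  also have "... \<le> - (q2 / 2 - p2 / 6) * r powr p2"
  proof -
    have "p1/3 * r powr p1 \<le> (q2/2 - p2/6) * r powr (p2 - p1) * r powr p1"
    proof -
      have "p1/3 \<le> (q2/2 - p2/6) * r powr (p2 - p1)" using T c unfolding r_def[symmetric]
        by (simp add: field_simps)
      thus ?thesis using rpos by (intro mult_right_mono) auto
    qed
    also have "... = (q2/2 - p2/6) * r powr p2" by (simp add: powr_add[symmetric])
    finally show ?thesis by (simp add: algebra_simps)
  qed
  finally show ?thesis unfolding r_def .
qed

theorem lemma6p1: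
  fixes \<gamma> h \<kappa>1 \<kappa>2 C :: real
    and p q \<alpha> \<beta> :: "nat \<Rightarrow> real"
  assumes "\<gamma> > 0" and "0 < h" and "h < 1" and "\<kappa>1 > 0" and "\<kappa>2 > 0"
    and "p 1 > 0" and "p 2 > 0" and "q 1 = 0" and "q 2 > 0"
    and "\<forall>i\<in>{1,2}. 0 < \<beta> i \<and> \<beta> i = alpha_h h * p i - (1 - h) * q i
                     \<and> \<beta> i < \<alpha> i \<and> \<alpha> i < 1"
    and "q 2 > p 2 / 3 + \<alpha> 2 / 2"
    and "p 2 > p 1"
    and "p 2 + 3/2 * \<alpha> 2 > p 1 + 3/2 * \<alpha> 1"
    and "C > 0"
  shows "\<forall>\<^sub>F rs in at_top.
     (\<forall>u v z. rs \<le> sqrt (u^2 + v^2) \<and> \<bar>v\<bar> \<le> C * u \<and> 0 < z \<and> z \<le> 1 \<longrightarrow>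
        (\<forall>i\<in>{1,2::nat}.
           opL \<gamma> h \<kappa>1 \<kappa>2 (phi0 (p i) (q i)) u v z
             \<le> - \<gamma> * p i * sqrt (u^2 + v^2) powr (p i) * z powr (q i)
               - \<beta> i / (2 * sqrt (1 + C^2)) * sqrt (u^2 + v^2) powr (p i + 1)
                   * z powr (q i - 2/3)))
   \<and> (\<forall>u v. rs \<le> sqrt (u^2 + v^2) \<and> \<bar>v\<bar> \<le> C * u \<longrightarrow>
        opQ (\<lambda>a b c. phi0 (p 1) (q 1) a b c + phi0 (p 2) (q 2) a b c) u v 1
          \<le> - (q 2 / 2 - p 2 / 6) * sqrt (u^2 + v^2) powr (p 2))"
proof -
  define s where "s = sqrt (1 + C^2)"
  define M where "M = (\<lambda>i::nat. 2 * sqrt (1 + C^2) * (\<kappa>1 + \<kappa>2) * p i * (1 + \<bar>p i - 2\<bar>) / \<beta> i)"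
  define c where "c = q 2 / 2 - p 2 / 6"
  define T where "T = (p 1 / (3 * c)) powr (1 / (p 2 - p 1))"
  have b1: "0 < \<beta> 1 \<and> \<beta> 1 = alpha_h h * p 1 - (1 - h) * q 1 \<and> \<beta> 1 < \<alpha> 1 \<and> \<alpha> 1 < 1"
    using assms(10) by auto
  have b2: "0 < \<beta> 2 \<and> \<beta> 2 = alpha_h h * p 2 - (1 - h) * q 2 \<and> \<beta> 2 < \<alpha> 2 \<and> \<alpha> 2 < 1"
    using assms(10) by auto
  have cpos: "c > 0" unfolding c_def using assms(11) b2 by linarith
  have ev: "\<forall>\<^sub>F rs in at_top. max 1 (max (M 1) (max (M 2) T)) \<le> rs"
    by (rule eventually_ge_at_top)
  show ?thesis
  proof (rule eventually_mono[OF ev], intro conjI allI impI)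
    fix rs u v z :: real
    assume rs: "max 1 (max (M 1) (max (M 2) T)) \<le> rs"
      and H: "rs \<le> sqrt (u^2 + v^2) \<and> \<bar>v\<bar> \<le> C * u \<and> 0 < z \<and> z \<le> 1"
    have r1: "1 \<le> sqrt (u^2+v^2)" using rs H by linarith
    have upos: "u > 0"
    proof (rule ccontr)
      assume "\<not> u > 0"
      hence "C * u \<le> 0" using assms(14) by (simp add: mult_nonneg_nonpos)
      hence v0: "v = 0" using H by auto
      have "0 \<le> C * u" using H by (meson abs_ge_zero order.trans)
      hence "u \<ge> 0" using assms(14) by (simp add: zero_le_mult_iff)
      hence "u = 0" using \<open>\<not> u > 0\<close> by simp
      note v0 this
      thus False using r1 by simp
    qed
    show "\<forall>i\<in>{1,2::nat}.
           opL \<gamma> h \<kappa>1 \<kappa>2 (phi0 (p i) (q i)) u v z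
             \<le> - \<gamma> * p i * sqrt (u^2 + v^2) powr (p i) * z powr (q i)
               - \<beta> i / (2 * sqrt (1 + C^2)) * sqrt (u^2 + v^2) powr (p i + 1)
                   * z powr (q i - 2/3)"
    proof
      fix i :: nat assume i: "i \<in> {1,2}"
      have bi: "0 < \<beta> i" "\<beta> i = alpha_h h * p i - (1 - h) * q i" using i b1 b2 by auto
      have pi: "p i > 0" using i assms(6,7) by auto
      have Mi: "M i \<le> sqrt (u^2+v^2)" using i rs H by auto
      show "opL \<gamma> h \<kappa>1 \<kappa>2 (phi0 (p i) (q i)) u v z
             \<le> - \<gamma> * p i * sqrt (u^2 + v^2) powr (p i) * z powr (q i)
               - \<beta> i / (2 * sqrt (1 + C^2)) * sqrt (u^2 + v^2) powr (p i + 1)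
                   * z powr (q i - 2/3)"
        by (rule L_bound[OF assms(1,4,5) pi bi(1) bi(2) upos _ _ assms(14) r1]) (use H Mi M_def in auto)
    qed
  next
    fix rs u v :: real
    assume rs: "max 1 (max (M 1) (max (M 2) T)) \<le> rs"
      and H: "rs \<le> sqrt (u^2 + v^2) \<and> \<bar>v\<bar> \<le> C * u"
    have r1: "1 \<le> sqrt (u^2+v^2)" using rs H by linarith
    have pos: "u^2+v^2 > 0"
    proof (rule ccontr)
      assume "\<not> u^2+v^2 > 0"
      hence "u^2+v^2 = 0" by (metis add_nonneg_nonneg zero_le_power2 not_less order.antisym)
      thus False using r1 by simp
    qed
    have Tr: "T \<le> sqrt (u^2+v^2)" using rs H by linarith
    have d: "p 2 - p 1 > 0" using assms(12) by simp
    have K: "p 1 / (3 * c) > 0" using assms(6) cpos by simp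
    have "p 1 / (3 * c) = T powr (p 2 - p 1)"
      unfolding T_def using K d cpos assms(6) by (simp add: powr_powr)
    also have "... \<le> sqrt (u^2+v^2) powr (p 2 - p 1)"
      using Tr d T_def by (intro powr_mono2) auto
    finally have Tb: "p 1 / (3 * (q 2 / 2 - p 2 / 6)) \<le> sqrt (u^2+v^2) powr (p 2 - p 1)" by (simp add: c_def)
    show "opQ (\<lambda>a b c. phi0 (p 1) (q 1) a b c + phi0 (p 2) (q 2) a b c) u v 1
          \<le> - (q 2 / 2 - p 2 / 6) * sqrt (u^2 + v^2) powr (p 2)"
      using Q_bound[OF pos assms(6) assms(12) _ Tb] cpos assms(8) by (simp add: c_def)
  qed
qed

end
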